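(* Let $f:\mathbb{R}\to\mathbb{R}$ be continuous, and let $(x_n)_{n\in\mathbb{N}}\subseteq\mathcal{E}$ and $x\in\mathcal{E}$ with $x_n\to x$ in unbounded order (uo). Then $f\circ x_n\to f\circ x$ in unbounded order in $\mathcal{E}^u$.
   Context: Let $\mathcal{E}$ be an order complete vector lattice with a weak order unit $E$, $K$ its Stone space (extremally disconnected compact Hausdorff), and $C^\infty(K)$ the vector lattice of continuous functions $K\to[-\infty,\infty]$ finite off a nowhere dense set (identified when equal off a nowhere dense set), which is the universal completion $\mathcal{E}^u$. Fix a Maeda–Ogasawara representation of $\mathcal{E}$ as an order dense ideal of $C^\infty(K)$ with $E$ corresponding to $\mathbf{1}$. For continuous $f:\mathbb{R}\to\mathbb{R}$ and $X\in C^\infty(K)$, $f\circ X$ denotes the unique element of $C^\infty(K)$ agreeing with $\omega\mapsto f(X(\omega))$ on the open dense set where $X$ is finite (by the paper's main theorem, this coincides with the Daniell functional calculus $f(X)$). A sequence $(y_n)$ in a vector lattice $F$ converges in unbounded order (uo) to $y$ if $|y_n-y|\wedge u\to0$ in order for every $u\in F_+$. *)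

theory Defs
  imports "HOL-Analysis.Analysis"
begin

text \<open>The Stone space K is modelled as a type 'a with its topology (class t2_space),
  assumed compact and extremally disconnected.\<close>

definition extremally_disconnected :: "'a::topological_space itself \<Rightarrow> bool" where
  "extremally_disconnected _ \<longleftrightarrow> (\<forall>U::'a set. open U \<longrightarrow> open (closure U))"

definition nowhere_dense :: "'a::topological_space set \<Rightarrow> bool" where
  "nowhere_dense S \<longleftrightarrow> interior (closure S) = {}"

text \<open>Two continuous functions agreeing off a nowhere dense set agree everywhere (K, ereal Hausdorff),
  so the identification in the paper is trivial on this set of representatives.\<close>

definition Cinf :: "('a::topological_space \<Rightarrow> ereal) set" where
  "Cinf = {X. continuous_on UNIV X \<and> nowhere_dense {\<omega>. \<bar>X \<omega>\<bar> = \<infinity>}}"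

definition finite_at :: "('a \<Rightarrow> ereal) \<Rightarrow> 'a \<Rightarrow> bool" where
  "finite_at X \<omega> \<longleftrightarrow> \<bar>X \<omega>\<bar> \<noteq> \<infinity>"

text \<open>Vector space operations of C^infty(K): unique continuous extension from the open dense
  set where the arguments are finite.\<close>

definition cinf_plus :: "('a::topological_space \<Rightarrow> ereal) \<Rightarrow> ('a \<Rightarrow> ereal) \<Rightarrow> ('a \<Rightarrow> ereal)" where
  "cinf_plus X Y = (THE Z. Z \<in> Cinf \<and>
      (\<forall>\<omega>. finite_at X \<omega> \<and> finite_at Y \<omega> \<longrightarrow> Z \<omega> = X \<omega> + Y \<omega>))"

definition cinf_minus :: "('a::topological_space \<Rightarrow> ereal) \<Rightarrow> ('a \<Rightarrow> ereal) \<Rightarrow> ('a \<Rightarrow> ereal)" where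
  "cinf_minus X Y = (THE Z. Z \<in> Cinf \<and>
      (\<forall>\<omega>. finite_at X \<omega> \<and> finite_at Y \<omega> \<longrightarrow> Z \<omega> = X \<omega> - Y \<omega>))"

definition cinf_scale :: "real \<Rightarrow> ('a::topological_space \<Rightarrow> ereal) \<Rightarrow> ('a \<Rightarrow> ereal)" where
  "cinf_scale c X = (THE Z. Z \<in> Cinf \<and>
      (\<forall>\<omega>. finite_at X \<omega> \<longrightarrow> Z \<omega> = ereal c * X \<omega>))"

definition cinf_comp :: "(real \<Rightarrow> real) \<Rightarrow> ('a::topological_space \<Rightarrow> ereal) \<Rightarrow> ('a \<Rightarrow> ereal)" where
  "cinf_comp f X = (THE Z. Z \<in> Cinf \<and>
      (\<forall>\<omega>. finite_at X \<omega> \<longrightarrow> Z \<omega> = ereal (f (real_of_ereal (X \<omega>)))))"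

definition cinf_abs :: "('a \<Rightarrow> ereal) \<Rightarrow> ('a \<Rightarrow> ereal)" where
  "cinf_abs X = (\<lambda>\<omega>. \<bar>X \<omega>\<bar>)"

definition cinf_zero :: "'a \<Rightarrow> ereal" where
  "cinf_zero = (\<lambda>_. 0)"

definition cinf_one :: "'a \<Rightarrow> ereal" where
  "cinf_one = (\<lambda>_. 1)"

text \<open>Order convergence of a sequence in the sublattice L (with order and infima taken in L):
  there is a net z_alpha decreasing to 0 in L (modelled as a downward directed subset D of L
  with infimum 0 in L, indexed by itself) dominating |y_n - y| eventually for each alpha.\<close>

definition oconv :: "('a::topological_space \<Rightarrow> ereal) set \<Rightarrow> (nat \<Rightarrow> 'a \<Rightarrow> ereal) \<Rightarrow> ('a \<Rightarrow> ereal) \<Rightarrow> bool" where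
  "oconv L ys y \<longleftrightarrow> (\<exists>D. D \<subseteq> L \<and> D \<noteq> {} \<and>
      (\<forall>a\<in>D. \<forall>b\<in>D. \<exists>c\<in>D. c \<le> a \<and> c \<le> b) \<and>
      (\<forall>z\<in>D. cinf_zero \<le> z) \<and>
      (\<forall>w\<in>L. (\<forall>z\<in>D. w \<le> z) \<longrightarrow> w \<le> cinf_zero) \<and>
      (\<forall>z\<in>D. \<exists>N. \<forall>n\<ge>N. cinf_abs (cinf_minus (ys n) y) \<le> z))"

definition uo_conv :: "('a::topological_space \<Rightarrow> ereal) set \<Rightarrow> (nat \<Rightarrow> 'a \<Rightarrow> ereal) \<Rightarrow> ('a \<Rightarrow> ereal) \<Rightarrow> bool" where
  "uo_conv L ys y \<longleftrightarrow> (\<forall>u\<in>L. cinf_zero \<le> u \<longrightarrow>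
      oconv L (\<lambda>n. inf (cinf_abs (cinf_minus (ys n) y)) u) cinf_zero)"

definition cinf_ideal :: "('a::topological_space \<Rightarrow> ereal) set \<Rightarrow> bool" where
  "cinf_ideal E \<longleftrightarrow> E \<subseteq> Cinf \<and> cinf_zero \<in> E \<and>
     (\<forall>X\<in>E. \<forall>Y\<in>E. cinf_plus X Y \<in> E) \<and>
     (\<forall>c. \<forall>X\<in>E. cinf_scale c X \<in> E) \<and>
     (\<forall>X\<in>E. \<forall>Y\<in>Cinf. cinf_abs Y \<le> cinf_abs X \<longrightarrow> Y \<in> E)"

definition order_dense_in_cinf :: "('a::topological_space \<Rightarrow> ereal) set \<Rightarrow> bool" where
  "order_dense_in_cinf E \<longleftrightarrow>
     (\<forall>Y\<in>Cinf. cinf_zero < Y \<longrightarrow> (\<exists>X\<in>E. cinf_zero < X \<and> X \<le> Y))"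

end

theory Submission
  imports Defs
begin

lemma baire_K:
  assumes "compact (UNIV::'a::t2_space set)" "countable (G::'a set set)" "\<forall>T\<in>G. closed T \<and> interior T = {}"
  shows "interior (\<Union>G) = {}"
proof -
  have cs: "compact_space (euclidean::'a topology)"
    using assms(1) by (simp add: compact_space_def)
  have lc: "locally_compact_space (euclidean::'a topology)"
    using cs compact_imp_locally_compact_space by blast
  have rs: "regular_space (euclidean::'a topology)"
    by (rule compact_Hausdorff_imp_regular_space[OF cs]) (simp add: Hausdorff_space_def disjnt_def, metis hausdorff)
  have "euclidean interior_of \<Union>G = {}"
    by (rule Baire_category_aux[OF lc rs assms(2)]) (use assms(3) in auto)
  then show ?thesis by simp
qed

lemma finite_at_iff: "finite_at X w \<longleftrightarrow> -\<infinity> < X w \<and> X w < \<infinity>"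
  unfolding finite_at_def by (cases "X w") auto

lemma open_finite_at:
  assumes "continuous_on UNIV X" shows "open {w. finite_at X w}"
proof -
  have "open {w. (\<lambda>_. -\<infinity>) w < X w \<and> X w < (\<lambda>_. \<infinity>) w}"
    by (intro open_Collect_conj open_Collect_less assms continuous_on_const)
  then show ?thesis by (simp add: finite_at_iff)
qed

lemma nowhere_dense_mono: "S \<subseteq> T \<Longrightarrow> nowhere_dense T \<Longrightarrow> nowhere_dense S"
  unfolding nowhere_dense_def by (metis closure_mono interior_mono subset_empty)

lemma Cinf_closed_inf:
  assumes "X \<in> Cinf" shows "closed {w. \<not> finite_at X w}" "interior {w. \<not> finite_at X w} = {}"
proof -
  have "closed (- {w. finite_at X w})" using open_finite_at assms Cinf_def by blast
  moreover have e: "- {w. finite_at X w} = {w. \<not> finite_at X w}" by auto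
  ultimately show c: "closed {w. \<not> finite_at X w}" by simp
  have "nowhere_dense {w. \<bar>X w\<bar> = \<infinity>}" using assms Cinf_def by blast
  then show "interior {w. \<not> finite_at X w} = {}"
    using c unfolding nowhere_dense_def finite_at_def by (simp add: closure_closed)
qed

lemma dense_finite_at:
  assumes "X \<in> Cinf" shows "closure {w. finite_at X w} = UNIV"
proof -
  have "closure (- {w. \<not> finite_at X w}) = UNIV"
    by (simp add: closure_complement Cinf_closed_inf[OF assms])
  moreover have "- {w. \<not> finite_at X w} = {w. finite_at X w}" by auto
  ultimately show ?thesis by simp
qed

lemma dense_finite_at2:
  assumes "X \<in> Cinf" "Y \<in> Cinf" shows "closure {w. finite_at X w \<and> finite_at Y w} = UNIV"
proof -
  have "interior ({w. \<not> finite_at X w} \<union> {w. \<not> finite_at Y w}) = {}"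
    by (simp add: interior_closed_Un_empty_interior Cinf_closed_inf assms)
  moreover have "{w. \<not> finite_at X w} \<union> {w. \<not> finite_at Y w} = - {w. finite_at X w \<and> finite_at Y w}" by auto
  ultimately show ?thesis by (metis closure_complement double_complement Compl_empty_eq)
qed

lemma cont_unique:
  fixes Z1 Z2 :: "'a::topological_space \<Rightarrow> ereal"
  assumes "continuous_on UNIV Z1" "continuous_on UNIV Z2" "closure S = UNIV" "\<forall>w\<in>S. Z1 w = Z2 w"
  shows "Z1 = Z2"
proof -
  have "closed {w. Z1 w = Z2 w}" by (rule closed_Collect_eq[OF assms(1,2)])
  then have "closure S \<subseteq> {w. Z1 w = Z2 w}" using assms(4) by (intro closure_minimal) auto
  then show ?thesis using assms(3) by auto
qed

lemma ext_exists:
  fixes g :: "'a::t2_space \<Rightarrow> ereal"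
  assumes extr: "extremally_disconnected TYPE('a)" and G: "open G" and cg: "continuous_on G g"
  shows "\<exists>H. continuous_on UNIV H \<and> (\<forall>w\<in>G. H w = g w)"
proof -
  define H where "H w = (INF U\<in>{U. open U \<and> w \<in> U}. SUP t\<in>U \<inter> G. g t)" for w
  have ext: "open (closure U)" if "open U" for U :: "'a set"
    using extr that unfolding extremally_disconnected_def by blast
  have "isCont H w" for w
    unfolding continuous_at
  proof (rule order_tendstoI)
    fix b assume "H w < b"
    then obtain U where U: "open U" "w \<in> U" "(SUP t\<in>U \<inter> G. g t) < b"
      unfolding H_def INF_less_iff by blast
    have "H x < b" if "x \<in> U" for x
    proof -
      have "H x \<le> (SUP t\<in>U \<inter> G. g t)" unfolding H_def using U that by (intro INF_lower) auto
      then show ?thesis using U by simp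
    qed
    then show "\<forall>\<^sub>F x in at w. H x < b"
      unfolding eventually_at_topological using U by blast
  next
    fix a assume "a < H w"
    then obtain a' where a': "a < a'" "a' < H w" using dense by blast
    define A where "A = G \<inter> g -` {a'<..}"
    have ov: "\<forall>B. open B \<longrightarrow> open (G \<inter> g -` B)" using continuous_on_open_vimage[OF G, of g] cg by (simp add: Int_commute)
    have oA: "open A" unfolding A_def using ov open_greaterThan by blast
    have wA: "w \<in> closure A"
    proof (rule ccontr)
      assume "w \<notin> closure A"
      define U where "U = - closure A"
      have U: "open U" "w \<in> U" using \<open>w \<notin> closure A\<close> U_def by auto
      have "(SUP t\<in>U \<inter> G. g t) \<le> a'"
      proof (rule SUP_least)
        fix t assume "t \<in> U \<inter> G"
        then have "t \<notin> A" using U_def closure_subset by blast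
        then show "g t \<le> a'" using \<open>t \<in> U \<inter> G\<close> A_def by auto
      qed
      moreover have "H w \<le> (SUP t\<in>U \<inter> G. g t)" unfolding H_def using U by (intro INF_lower) auto
      ultimately show False using a' by simp
    qed
    have "a' \<le> H x" if "x \<in> closure A" for x
      unfolding H_def
    proof (rule INF_greatest)
      fix U assume "U \<in> {U. open U \<and> x \<in> U}"
      then have U: "open U" "x \<in> U" by auto
      have "U \<inter> closure A \<noteq> {}" using U that by auto
      then have "U \<inter> A \<noteq> {}" using open_Int_closure_eq_empty[OF U(1)] by blast
      then obtain t where t: "t \<in> U" "t \<in> A" by blast
      then have "a' < g t" "t \<in> U \<inter> G" unfolding A_def by auto
      then show "a' \<le> (SUP t\<in>U \<inter> G. g t)"
        by (meson SUP_upper less_imp_le order_trans)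
    qed
    then have "\<forall>x\<in>closure A. a < H x" using a'(1) less_le_trans by blast
    then show "\<forall>\<^sub>F x in at w. a < H x"
      unfolding eventually_at_topological using wA ext[OF oA] by blast
  qed
  then have "continuous_on UNIV H" by (simp add: continuous_at_imp_continuous_on)
  moreover have "H t = g t" if t: "t \<in> G" for t
  proof (rule antisym)
    show "H t \<le> g t"
    proof (rule dense_ge)
      fix b assume "g t < b"
      define U where "U = G \<inter> g -` {..<b}"
      have ov: "\<forall>B. open B \<longrightarrow> open (G \<inter> g -` B)" using continuous_on_open_vimage[OF G, of g] cg by (simp add: Int_commute)
      have U: "open U" "t \<in> U" unfolding U_def
        using ov open_lessThan \<open>g t < b\<close> t by auto
      have "(SUP s\<in>U \<inter> G. g s) \<le> b" by (rule SUP_least) (auto simp: U_def)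
      moreover have "H t \<le> (SUP s\<in>U \<inter> G. g s)" unfolding H_def using U by (intro INF_lower) auto
      ultimately show "H t \<le> b" by simp
    qed
    show "g t \<le> H t" unfolding H_def
      by (rule INF_greatest) (use t in \<open>auto intro: SUP_upper\<close>)
  qed
  ultimately show ?thesis by blast
qed


lemma nd_compl_dense:
  assumes "open S" "closure S = UNIV" shows "nowhere_dense (- S)"
  unfolding nowhere_dense_def using assms
  by (simp add: closure_closed interior_complement open_closed)

lemma the_cinf:
  fixes Q :: "'a::t2_space \<Rightarrow> bool" and v :: "'a \<Rightarrow> ereal"
  assumes extr: "extremally_disconnected TYPE('a)" and o: "open {w. Q w}" and d: "closure {w. Q w} = UNIV"
    and c: "continuous_on {w. Q w} v" and fin: "\<forall>w. Q w \<longrightarrow> \<bar>v w\<bar> \<noteq> \<infinity>"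
  shows "(THE Z. Z \<in> Cinf \<and> (\<forall>w. Q w \<longrightarrow> Z w = v w)) \<in> Cinf \<and>
         (\<forall>w. Q w \<longrightarrow> (THE Z. Z \<in> Cinf \<and> (\<forall>w. Q w \<longrightarrow> Z w = v w)) w = v w)"
proof -
  obtain H where H: "continuous_on UNIV H" "\<forall>w\<in>{w. Q w}. H w = v w"
    using ext_exists[OF extr o c] by blast
  have "{w. \<bar>H w\<bar> = \<infinity>} \<subseteq> - {w. Q w}" using H(2) fin by auto
  then have "nowhere_dense {w. \<bar>H w\<bar> = \<infinity>}"
    using nowhere_dense_mono nd_compl_dense[OF o d] by blast
  then have HC: "H \<in> Cinf" using H(1) by (simp add: Cinf_def)
  have uniq: "Z = H" if "Z \<in> Cinf \<and> (\<forall>w. Q w \<longrightarrow> Z w = v w)" for Z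
    by (rule cont_unique[of Z H "{w. Q w}"]) (use that H d in \<open>auto simp: Cinf_def\<close>)
  have ex1: "\<exists>!Z. Z \<in> Cinf \<and> (\<forall>w. Q w \<longrightarrow> Z w = v w)"
    using HC H(2) uniq by blast
  from theI'[OF ex1] show ?thesis by blast
qed

lemma the_eq:
  fixes Q :: "'a::topological_space \<Rightarrow> bool" and v :: "'a \<Rightarrow> ereal"
  assumes "W \<in> Cinf" "\<forall>w. Q w \<longrightarrow> W w = v w" "closure {w. Q w} = UNIV"
  shows "(THE Z. Z \<in> Cinf \<and> (\<forall>w. Q w \<longrightarrow> Z w = v w)) = W"
proof (rule the_equality)
  show "W \<in> Cinf \<and> (\<forall>w. Q w \<longrightarrow> W w = v w)" using assms by blast
  fix Z assume "Z \<in> Cinf \<and> (\<forall>w. Q w \<longrightarrow> Z w = v w)"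
  then show "Z = W"
    by (intro cont_unique[of Z W "{w. Q w}"]) (use assms in \<open>auto simp: Cinf_def\<close>)
qed

lemma cont_real:
  fixes X :: "'a::t2_space \<Rightarrow> ereal"
  assumes "X \<in> Cinf" shows "continuous_on {w. finite_at X w} (\<lambda>w. real_of_ereal (X w))"
proof -
  have "isCont (\<lambda>w. real_of_ereal (X w)) w" if "w \<in> {w. finite_at X w}" for w
  proof -
  from that have fw: "\<bar>X w\<bar> \<noteq> \<infinity>" by (simp add: finite_at_def)
  have "isCont X w" using assms by (simp add: Cinf_def continuous_on_eq_continuous_at)
  then show "isCont (\<lambda>w. real_of_ereal (X w)) w"
    using isCont_o2 continuous_at_of_ereal[OF fw] by blast
  qed
  then show ?thesis by (intro continuous_at_imp_continuous_on) blast
qed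

lemma minus_props:
  fixes X Y :: "'a::t2_space \<Rightarrow> ereal"
  assumes extr: "extremally_disconnected TYPE('a)" and XY: "X \<in> Cinf" "Y \<in> Cinf"
  shows "cinf_minus X Y \<in> Cinf \<and> (\<forall>w. finite_at X w \<and> finite_at Y w \<longrightarrow> cinf_minus X Y w = X w - Y w)"
proof -
  let ?S = "{w. finite_at X w \<and> finite_at Y w}"
  have "open {w. finite_at X w}" "open {w. finite_at Y w}"
    using open_finite_at XY by (auto simp: Cinf_def)
  then have o: "open ?S" by (simp add: open_Int Collect_conj_eq)
  have c0: "continuous_on ?S (\<lambda>w. ereal (real_of_ereal (X w) - real_of_ereal (Y w)))"
    by (intro continuous_intros continuous_on_subset[OF cont_real[OF XY(1)]]
        continuous_on_subset[OF cont_real[OF XY(2)]]) auto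
  have c: "continuous_on ?S (\<lambda>w. X w - Y w)"
    using c0 by (rule continuous_on_cong[THEN iffD1, rotated 2]) (auto simp: finite_at_def ereal_real)
  have fin: "\<forall>w. finite_at X w \<and> finite_at Y w \<longrightarrow> \<bar>X w - Y w\<bar> \<noteq> \<infinity>"
    by (auto simp: finite_at_def)
  show ?thesis unfolding cinf_minus_def
    using the_cinf[where Q="\<lambda>w. finite_at X w \<and> finite_at Y w" and v="\<lambda>w. X w - Y w",
        OF extr o dense_finite_at2[OF XY] c fin] by simp
qed

lemma comp_props:
  fixes X :: "'a::t2_space \<Rightarrow> ereal"
  assumes extr: "extremally_disconnected TYPE('a)" and X: "X \<in> Cinf" and f: "continuous_on UNIV f"
  shows "cinf_comp f X \<in> Cinf \<and> (\<forall>w. finite_at X w \<longrightarrow> cinf_comp f X w = ereal (f (real_of_ereal (X w))))"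
proof -
  have o: "open {w. finite_at X w}" using open_finite_at X by (auto simp: Cinf_def)
  have c: "continuous_on {w. finite_at X w} (\<lambda>w. ereal (f (real_of_ereal (X w))))"
    by (intro continuous_on_ereal continuous_on_compose2[OF f cont_real[OF X]]) auto
  show ?thesis unfolding cinf_comp_def
    using the_cinf[where Q="\<lambda>w. finite_at X w" and v="\<lambda>w. ereal (f (real_of_ereal (X w)))",
        OF extr o dense_finite_at[OF X] c] by simp
qed

lemma minus_zero:
  assumes "Y \<in> Cinf" shows "cinf_minus Y cinf_zero = Y"
  unfolding cinf_minus_def
  by (rule the_eq) (use assms dense_finite_at[OF assms] in \<open>auto simp: cinf_zero_def finite_at_def\<close>)


lemma cont_clopen_if:
  assumes "open S" "closed S" "continuous_on UNIV u"
  shows "continuous_on UNIV (\<lambda>p. if p \<in> S then c else u p)"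
proof -
  have "continuous_on (S \<union> - S) (\<lambda>p. if p \<in> S then c else u p)"
    by (rule continuous_on_cases)
       (use assms in \<open>auto intro: continuous_on_subset[OF assms(3)]\<close>)
  then show ?thesis by simp
qed

lemma closed_ball_D:
  fixes D :: "('a::topological_space \<Rightarrow> ereal) set"
  assumes "D \<subseteq> Cinf"
  shows "closed {p. \<forall>z\<in>D. ereal e \<le> z p}"
proof -
  have "closed {p. \<forall>z. z \<in> D \<longrightarrow> ereal e \<le> z p}"
  proof (rule closed_Collect_all)
    fix z
    show "closed {p. z \<in> D \<longrightarrow> ereal e \<le> z p}"
    proof (cases "z \<in> D")
      case True
      then have "continuous_on UNIV z" using assms by (auto simp: Cinf_def)
      then have "closed {p. (\<lambda>_. ereal e) p \<le> z p}" by (intro closed_Collect_le continuous_on_const)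
      then show ?thesis using True by simp
    qed simp
  qed
  then show ?thesis by (simp only: Ball_def)
qed

lemma closed_ev:
  fixes g :: "nat \<Rightarrow> 'a::topological_space \<Rightarrow> ereal"
  assumes "\<And>n. continuous_on UNIV (g n)"
  shows "closed {p. \<forall>n\<ge>k. g n p \<le> ereal e}"
proof -
  have "closed {p. \<forall>n. k \<le> n \<longrightarrow> g n p \<le> ereal e}"
  proof (rule closed_Collect_all)
    fix n
    show "closed {p. k \<le> n \<longrightarrow> g n p \<le> ereal e}"
    proof (cases "k \<le> n")
      case True
      have "closed {p. g n p \<le> (\<lambda>_. ereal e) p}" by (intro closed_Collect_le continuous_on_const assms)
      then show ?thesis using True by simp
    qed simp
  qed
  then show ?thesis by simp
qed

lemma nd_empty: "nowhere_dense {}" by (simp add: nowhere_dense_def)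

theorem mainTheorem8:
  fixes E :: "('a::t2_space \<Rightarrow> ereal) set"
    and f :: "real \<Rightarrow> real"
    and xs :: "nat \<Rightarrow> 'a \<Rightarrow> ereal"
    and x :: "'a \<Rightarrow> ereal"
  assumes K_compact: "compact (UNIV :: 'a set)"
    and K_extr: "extremally_disconnected TYPE('a)"
    and E_ideal: "cinf_ideal E"
    and E_dense: "order_dense_in_cinf E"
    and E_unit: "cinf_one \<in> E"
    and f_cont: "continuous_on UNIV f"
    and xs_in: "\<forall>n. xs n \<in> E"
    and x_in: "x \<in> E"
    and uo: "uo_conv E xs x"
  shows "uo_conv Cinf (\<lambda>n. cinf_comp f (xs n)) (cinf_comp f x)"
proof -
  have extO: "open (closure U)" if "open U" for U :: "'a set"
    using K_extr that unfolding extremally_disconnected_def by blast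
  have EC: "E \<subseteq> Cinf" using E_ideal by (simp add: cinf_ideal_def)
  have xsC: "xs n \<in> Cinf" for n using xs_in EC by blast
  have xC: "x \<in> Cinf" using x_in EC by blast
  define d where "d n = cinf_minus (xs n) x" for n
  have dP: "d n \<in> Cinf \<and> (\<forall>w. finite_at (xs n) w \<and> finite_at x w \<longrightarrow> d n w = xs n w - x w)" for n
    unfolding d_def by (rule minus_props[OF K_extr xsC xC])
  define Yn where "Yn n = inf (cinf_abs (d n)) cinf_one" for n
  have Ynf: "Yn n = (\<lambda>w. min \<bar>d n w\<bar> 1)" for n
    by (simp add: Yn_def cinf_abs_def cinf_one_def inf_fun_def inf_min)
  have YnC: "Yn n \<in> Cinf" for n
  proof -
    have "continuous_on UNIV (d n)" using dP[of n] by (simp add: Cinf_def)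
    then have "continuous_on UNIV (\<lambda>w. min \<bar>d n w\<bar> (1::ereal))"
      by (intro continuous_intros) auto
    moreover have "{w. \<bar>min \<bar>d n w\<bar> (1::ereal)\<bar> = \<infinity>} = {}"
      by (auto simp: min_def)
    ultimately show ?thesis by (simp add: Cinf_def Ynf nd_empty)
  qed
  have Ynn: "cinf_abs (cinf_minus (Yn n) cinf_zero) = Yn n" for n
    by (simp only: minus_zero[OF YnC]) (simp add: cinf_abs_def Ynf)
  have "oconv E (\<lambda>n. inf (cinf_abs (cinf_minus (xs n) x)) cinf_one) cinf_zero"
    using uo E_unit unfolding uo_conv_def by (auto simp: cinf_zero_def cinf_one_def le_fun_def)
  then have "oconv E Yn cinf_zero" unfolding Yn_def d_def by simp
  then obtain D where DE: "D \<subseteq> E" and Dne: "D \<noteq> {}"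
    and Dnn: "\<forall>z\<in>D. cinf_zero \<le> z"
    and infE: "\<forall>w\<in>E. (\<forall>z\<in>D. w \<le> z) \<longrightarrow> w \<le> cinf_zero"
    and ev0: "\<forall>z\<in>D. \<exists>N. \<forall>n\<ge>N. cinf_abs (cinf_minus (Yn n) cinf_zero) \<le> z"
    unfolding oconv_def by blast
  have ev: "\<forall>z\<in>D. \<exists>N. \<forall>n\<ge>N. \<forall>w. Yn n w \<le> z w"
    using ev0 by (simp add: Ynn le_fun_def)
  have DC: "D \<subseteq> Cinf" using DE EC by blast
  have Cint: "interior {p. \<forall>z\<in>D. ereal e \<le> z p} = {}" if e: "0 < e" "e \<le> 1" for e
  proof (rule ccontr)
    define V where "V = interior {p. \<forall>z\<in>D. ereal e \<le> z p}"
    assume "interior {p. \<forall>z\<in>D. ereal e \<le> z p} \<noteq> {}"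
    then obtain p0 where p0: "p0 \<in> V" unfolding V_def by blast
    have clV: "closure V \<subseteq> {p. \<forall>z\<in>D. ereal e \<le> z p}"
      unfolding V_def by (intro closure_minimal interior_subset closed_ball_D DC)
    have oV: "open (closure V)" using extO V_def by simp
    define wv where "wv p = (if p \<in> closure V then ereal e else 0)" for p
    have "continuous_on UNIV wv"
      unfolding wv_def by (intro cont_clopen_if oV) auto
    moreover have "{p. \<bar>wv p\<bar> = \<infinity>} = {}" by (auto simp: wv_def)
    ultimately have wvC: "wv \<in> Cinf" by (simp add: Cinf_def nd_empty)
    have "cinf_abs wv \<le> cinf_abs cinf_one"
      using e by (auto simp: le_fun_def cinf_abs_def cinf_one_def wv_def)
    then have "wv \<in> E" using E_ideal E_unit wvC unfolding cinf_ideal_def by blast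
    moreover have "\<forall>z\<in>D. wv \<le> z"
    proof (intro ballI)
      fix z assume z: "z \<in> D"
      show "wv \<le> z"
      proof (unfold le_fun_def, intro allI)
        fix p show "wv p \<le> z p"
        proof (cases "p \<in> closure V")
          case True then show ?thesis using clV z by (auto simp: wv_def)
        next
          case False then show ?thesis using Dnn z by (auto simp: wv_def le_fun_def cinf_zero_def)
        qed
      qed
    qed
    ultimately have "wv \<le> cinf_zero" using infE by blast
    then have "wv p0 \<le> 0" by (simp add: le_fun_def cinf_zero_def)
    moreover have "p0 \<in> closure V" using p0 closure_subset by blast
    ultimately show False using e by (simp add: wv_def)
  qed
  have conv: "(\<lambda>n. real_of_ereal (xs n w)) \<longlonglongrightarrow> real_of_ereal (x w)"
    if fxs: "\<forall>n. finite_at (xs n) w" and fx: "finite_at x w"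
      and gd: "\<forall>j::nat. \<exists>z\<in>D. z w < ereal (inverse (real (Suc j)))" for w
  proof (rule LIMSEQ_I)
    fix r :: real assume "0 < r"
    then obtain j where j: "inverse (real (Suc j)) < r" using reals_Archimedean by blast
    obtain z where z: "z \<in> D" "z w < ereal (inverse (real (Suc j)))" using gd by blast
    obtain N where N: "\<forall>n\<ge>N. \<forall>w. Yn n w \<le> z w" using ev z(1) by blast
    have "norm (real_of_ereal (xs n w) - real_of_ereal (x w)) < r" if n: "n \<ge> N" for n
    proof -
      define \<delta> where "\<delta> = real_of_ereal (xs n w) - real_of_ereal (x w)"
      have "\<bar>xs n w\<bar> \<noteq> \<infinity>" "\<bar>x w\<bar> \<noteq> \<infinity>" using fxs fx by (auto simp: finite_at_def)
      then obtain a b where ab: "xs n w = ereal a" "x w = ereal b"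
        by (metis ereal_real)
      have "d n w = ereal \<delta>" using dP fxs fx ab unfolding \<delta>_def
        by (simp add: finite_at_def)
      then have "min (ereal \<bar>\<delta>\<bar>) 1 < ereal (inverse (real (Suc j)))"
        using N n z(2) Ynf by (metis abs_ereal.simps(1) order_le_less_trans)
      moreover have "inverse (real (Suc j)) \<le> 1" using inverse_le_1_iff[of "real (Suc j)"] by simp
      ultimately have "\<bar>\<delta>\<bar> < inverse (real (Suc j))"
        by (cases "\<bar>\<delta>\<bar> \<le> 1") (auto simp: min_def one_ereal_def)
      then show ?thesis using j unfolding \<delta>_def by simp
    qed
    then show "\<exists>N. \<forall>n\<ge>N. norm (real_of_ereal (xs n w) - real_of_ereal (x w)) < r" by blast
  qed
  show ?thesis
    unfolding uo_conv_def
  proof (intro ballI impI)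
    fix u :: "'a \<Rightarrow> ereal" assume uC: "u \<in> Cinf" and u0: "cinf_zero \<le> u"
    have unn: "0 \<le> u p" for p using u0 by (simp add: le_fun_def cinf_zero_def)
    have ucont: "continuous_on UNIV u" using uC by (simp add: Cinf_def)
    have und: "nowhere_dense {p. \<bar>u p\<bar> = \<infinity>}" using uC by (simp add: Cinf_def)
    have cP: "cinf_comp f X \<in> Cinf \<and> (\<forall>w. finite_at X w \<longrightarrow> cinf_comp f X w = ereal (f (real_of_ereal (X w))))"
      if "X \<in> Cinf" for X :: "'a \<Rightarrow> ereal" using comp_props[OF K_extr that f_cont] .
    define G where "G n = cinf_minus (cinf_comp f (xs n)) (cinf_comp f x)" for n
    have GP: "G n \<in> Cinf \<and> (\<forall>w. finite_at (cinf_comp f (xs n)) w \<and> finite_at (cinf_comp f x) w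
        \<longrightarrow> G n w = cinf_comp f (xs n) w - cinf_comp f x w)" for n
      unfolding G_def by (rule minus_props[OF K_extr]) (use cP xsC xC in auto)
    define g where "g n = inf (cinf_abs (G n)) u" for n
    have gf: "g n = (\<lambda>w. min \<bar>G n w\<bar> (u w))" for n
      by (simp add: g_def cinf_abs_def inf_fun_def inf_min)
    have gnn: "0 \<le> g n p" for n p using unn by (simp add: gf)
    have gle: "g n p \<le> u p" for n p by (simp add: gf)
    have gcont: "continuous_on UNIV (g n)" for n
    proof -
      have "continuous_on UNIV (G n)" using GP[of n] by (simp add: Cinf_def)
      then show ?thesis unfolding gf by (intro continuous_intros ucont) auto
    qed
    have gC: "g n \<in> Cinf" for n
    proof -
      have "{p. \<bar>g n p\<bar> = \<infinity>} \<subseteq> {p. \<bar>u p\<bar> = \<infinity>}"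
        using gnn gle by (metis (mono_tags, lifting) abs_ereal_ge0 ereal_infty_less_eq(1) mem_Collect_eq subsetI)
      then show ?thesis using gcont nowhere_dense_mono und by (auto simp: Cinf_def)
    qed
    have gsimp: "cinf_abs (cinf_minus (g n) cinf_zero) = g n" for n
      using gnn by (simp add: minus_zero[OF gC] cinf_abs_def)
    have goodF: "\<exists>k. \<forall>n\<ge>k. g n w \<le> ereal e"
      if fxs: "\<forall>n. finite_at (xs n) w" and fx: "finite_at x w"
        and gd: "\<forall>j::nat. \<exists>z\<in>D. z w < ereal (inverse (real (Suc j)))" and e: "0 < e" for w e
    proof -
      have "isCont f (real_of_ereal (x w))" using f_cont continuous_on_eq_continuous_at by blast
      then have "(\<lambda>n. f (real_of_ereal (xs n w))) \<longlonglongrightarrow> f (real_of_ereal (x w))"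
        using isCont_tendsto_compose conv[OF fxs fx gd] by blast
      then obtain k where k: "\<forall>n\<ge>k. norm (f (real_of_ereal (xs n w)) - f (real_of_ereal (x w))) < e"
        using LIMSEQ_D e by blast
      have "g n w \<le> ereal e" if "n \<ge> k" for n
      proof -
        have c1: "cinf_comp f (xs n) w = ereal (f (real_of_ereal (xs n w)))" using cP xsC fxs by blast
        have c2: "cinf_comp f x w = ereal (f (real_of_ereal (x w)))" using cP xC fx by blast
        have "G n w = ereal (f (real_of_ereal (xs n w)) - f (real_of_ereal (x w)))"
          using GP c1 c2 by (simp add: finite_at_def)
        moreover have "\<bar>f (real_of_ereal (xs n w)) - f (real_of_ereal (x w))\<bar> \<le> e"
          using k that by (simp add: less_imp_le)
        ultimately have "\<bar>G n w\<bar> \<le> ereal e" by simp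
        then show ?thesis unfolding gf by (meson min.coboundedI1)
      qed
      then show ?thesis by blast
    qed
    define D' where "D' = {z \<in> Cinf. cinf_zero \<le> z \<and> (\<exists>N. \<forall>n\<ge>N. g n \<le> z)}"
    have "oconv Cinf g cinf_zero"
      unfolding oconv_def
    proof (intro exI[of _ D'] conjI)
      show "D' \<subseteq> Cinf" unfolding D'_def by blast
      have "u \<in> D'" unfolding D'_def using uC u0 gle by (auto simp: le_fun_def)
      then show "D' \<noteq> {}" by blast
      show "\<forall>z\<in>D'. cinf_zero \<le> z" unfolding D'_def by blast
      show "\<forall>z\<in>D'. \<exists>N. \<forall>n\<ge>N. cinf_abs (cinf_minus (g n) cinf_zero) \<le> z"
        unfolding D'_def gsimp by blast
      show "\<forall>a\<in>D'. \<forall>b\<in>D'. \<exists>c\<in>D'. c \<le> a \<and> c \<le> b"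
      proof (intro ballI)
        fix a b assume a: "a \<in> D'" and b: "b \<in> D'"
        have ann: "0 \<le> a p" "0 \<le> b p" for p using a b by (auto simp: D'_def le_fun_def cinf_zero_def)
        have ac: "continuous_on UNIV a" "continuous_on UNIV b" using a b by (auto simp: D'_def Cinf_def)
        have "nowhere_dense {p. \<bar>a p\<bar> = \<infinity>}" using a by (auto simp: D'_def Cinf_def)
        moreover have "{p. \<bar>inf a b p\<bar> = \<infinity>} \<subseteq> {p. \<bar>a p\<bar> = \<infinity>}"
        proof
          fix p assume "p \<in> {p. \<bar>inf a b p\<bar> = \<infinity>}"
          then have "\<bar>min (a p) (b p)\<bar> = \<infinity>" by (simp add: inf_fun_def inf_min)
          moreover have "0 \<le> min (a p) (b p)" using ann by simp
          ultimately have "min (a p) (b p) = \<infinity>" by simp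
          then show "p \<in> {p. \<bar>a p\<bar> = \<infinity>}" by (simp add: min_def split: if_splits)
        qed
        ultimately have nd: "nowhere_dense {p. \<bar>inf a b p\<bar> = \<infinity>}" using nowhere_dense_mono by blast
        have "continuous_on UNIV (\<lambda>p. min (a p) (b p))" by (intro continuous_intros ac)
        then have ic: "continuous_on UNIV (inf a b)" by (simp add: inf_fun_def inf_min)
        obtain Na where Na: "\<forall>n\<ge>Na. g n \<le> a" using a by (auto simp: D'_def)
        obtain Nb where Nb: "\<forall>n\<ge>Nb. g n \<le> b" using b by (auto simp: D'_def)
        have "\<forall>n\<ge>max Na Nb. g n \<le> inf a b" using Na Nb by simp
        then have "\<exists>N. \<forall>n\<ge>N. g n \<le> inf a b" by blast
        moreover have "cinf_zero \<le> inf a b" using a b by (auto simp: D'_def)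
        moreover have "inf a b \<in> Cinf" using nd ic by (simp add: Cinf_def)
        ultimately have "inf a b \<in> D'" unfolding D'_def by blast
        then show "\<exists>c\<in>D'. c \<le> a \<and> c \<le> b" by (intro bexI[of _ "inf a b"]) auto
      qed
      show "\<forall>w\<in>Cinf. (\<forall>z\<in>D'. w \<le> z) \<longrightarrow> w \<le> cinf_zero"
      proof (intro ballI impI)
        fix w :: "'a \<Rightarrow> ereal" assume wC: "w \<in> Cinf" and wle: "\<forall>z\<in>D'. w \<le> z"
        show "w \<le> cinf_zero"
        proof (rule ccontr)
          assume "\<not> w \<le> cinf_zero"
          then obtain w0 where "\<not> w w0 \<le> 0" by (auto simp: le_fun_def cinf_zero_def)
          then have "0 < w w0" by simp
          then obtain e where e: "0 < ereal e" "ereal e < w w0" using ereal_dense2 by blast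
          have e0: "0 < e" using e by simp
          have wcont: "continuous_on UNIV w" using wC by (simp add: Cinf_def)
          define V where "V = {p. (\<lambda>_. ereal e) p < w p}"
          have oV: "open V" unfolding V_def by (intro open_Collect_less continuous_on_const wcont)
          have w0V: "w0 \<in> V" using e by (simp add: V_def)
          define F where "F k = {p. \<forall>n\<ge>k. g n p \<le> ereal (e/2)}" for k
          have Fc: "closed (F k)" for k unfolding F_def by (rule closed_ev[OF gcont])
          define Cj where "Cj j = {p. \<forall>z\<in>D. ereal (inverse (real (Suc j))) \<le> z p}" for j :: nat
          define GG where "GG = range (\<lambda>n. {p. \<not> finite_at (xs n) p}) \<union> {{p. \<not> finite_at x p}}
              \<union> range Cj \<union> range (\<lambda>k. F k - interior (F k))"
          have cGG: "countable GG" unfolding GG_def by simp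
          have GGp: "\<forall>T\<in>GG. closed T \<and> interior T = {}"
          proof
            fix T assume "T \<in> GG"
            then consider (a) n where "T = {p. \<not> finite_at (xs n) p}" | (b) "T = {p. \<not> finite_at x p}"
              | (c) j where "T = Cj j" | (d) k where "T = F k - interior (F k)"
              unfolding GG_def by blast
            then show "closed T \<and> interior T = {}"
            proof cases
              case a then show ?thesis using Cinf_closed_inf[OF xsC] by simp
            next
              case b then show ?thesis using Cinf_closed_inf[OF xC] by simp
            next
              case c
              have "0 < inverse (real (Suc j))" "inverse (real (Suc j)) \<le> 1"
                using inverse_le_1_iff[of "real (Suc j)"] by auto
              then show ?thesis using c Cint closed_ball_D[OF DC] unfolding Cj_def by simp
            next
              case d
              have "interior (F k - interior (F k)) \<subseteq> interior (F k)" by (intro interior_mono) auto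
              moreover have "interior (F k - interior (F k)) \<subseteq> F k - interior (F k)" by (rule interior_subset)
              ultimately have "interior (F k - interior (F k)) = {}" by blast
              then show ?thesis using d Fc by (simp add: closed_Diff)
            qed
          qed
          have "\<exists>k. interior (F k) \<inter> V \<noteq> {}"
          proof (rule ccontr)
            assume nk: "\<not> (\<exists>k. interior (F k) \<inter> V \<noteq> {})"
            have "V \<subseteq> \<Union>GG"
            proof
              fix p assume pV: "p \<in> V"
              show "p \<in> \<Union>GG"
              proof (cases "\<exists>n. \<not> finite_at (xs n) p")
                case True then show ?thesis unfolding GG_def by blast
              next
                case nf: False
                show ?thesis
                proof (cases "finite_at x p")
                  case False then show ?thesis unfolding GG_def by blast
                next
                  case fx: True
                  show ?thesis
                  proof (cases "\<exists>j. p \<in> Cj j")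
                    case True then show ?thesis unfolding GG_def by blast
                  next
                    case False
                    then have gd: "\<forall>j::nat. \<exists>z\<in>D. z p < ereal (inverse (real (Suc j)))"
                      unfolding Cj_def by (auto simp: not_le)
                    obtain k where "\<forall>n\<ge>k. g n p \<le> ereal (e/2)"
                      using goodF[of p "e/2"] nf fx gd e0 by auto
                    then have "p \<in> F k" unfolding F_def by blast
                    moreover have "p \<notin> interior (F k)"
                    proof
                      assume "p \<in> interior (F k)"
                      with pV have "p \<in> interior (F k) \<inter> V" by (rule IntI[rotated])
                      then have "interior (F k) \<inter> V \<noteq> {}" by (rule ex_in_conv[THEN iffD1, OF exI])
                      with nk show False by (rule notE[OF _ exI])
                    qed
                    ultimately have pin: "p \<in> F k - interior (F k)" by (rule DiffI)
                    have "F k - interior (F k) \<in> GG" unfolding GG_def by (rule UnI2) (rule rangeI)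
                    then show ?thesis using pin by (rule UnionI)
                  qed
                qed
              qed
            qed
            then have "V \<subseteq> interior (\<Union>GG)" using oV by (rule interior_maximal)
            then show False using baire_K[OF K_compact cGG GGp] w0V by blast
          qed
          then obtain k where Wne: "interior (F k) \<inter> V \<noteq> {}" by blast
          define W where "W = interior (F k) \<inter> V"
          have oW: "open W" unfolding W_def using oV by blast
          have clW: "closure W \<subseteq> F k"
            using Fc interior_subset unfolding W_def by (intro closure_minimal) blast+
          have oclW: "open (closure W)" using extO oW by blast
          define z where "z p = (if p \<in> closure W then ereal (e/2) else u p)" for p
          have zc: "continuous_on UNIV z" unfolding z_def by (intro cont_clopen_if oclW ucont) auto
          have "{p. \<bar>z p\<bar> = \<infinity>} \<subseteq> {p. \<bar>u p\<bar> = \<infinity>}" by (auto simp: z_def)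
          then have "nowhere_dense {p. \<bar>z p\<bar> = \<infinity>}" using und nowhere_dense_mono by blast
          then have zC: "z \<in> Cinf" using zc by (simp add: Cinf_def)
          have z0: "cinf_zero \<le> z" using unn e0 by (auto simp: z_def le_fun_def cinf_zero_def)
          have "\<forall>n\<ge>k. g n \<le> z"
          proof (intro allI impI)
            fix n assume n: "k \<le> n"
            show "g n \<le> z" unfolding le_fun_def
            proof
              fix p show "g n p \<le> z p"
              proof (cases "p \<in> closure W")
                case True
                then have "p \<in> F k" using clW by blast
                then show ?thesis using True n by (simp add: z_def F_def)
              next
                case False then show ?thesis using gle by (simp add: z_def)
              qed
            qed
          qed
          then have "z \<in> D'" unfolding D'_def using zC z0 by blast
          then have "w \<le> z" using wle by blast
          obtain p where pW: "p \<in> W" using Wne W_def by blast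
          then have "p \<in> closure W" using closure_subset by blast
          then have zp: "z p = ereal (e/2)" by (simp add: z_def)
          have "w p \<le> z p" using \<open>w \<le> z\<close> by (simp add: le_fun_def)
          then have "w p \<le> ereal (e/2)" using zp by simp
          moreover have "ereal e < w p" using pW by (simp add: W_def V_def)
          ultimately have "ereal e < ereal (e/2)" by (rule less_le_trans[rotated])
          then show False using e0 by simp
        qed
      qed
    qed
    then show "oconv Cinf (\<lambda>n. inf (cinf_abs (cinf_minus (cinf_comp f (xs n)) (cinf_comp f x))) u) cinf_zero"
    proof -
      have "(\<lambda>n. inf (cinf_abs (cinf_minus (cinf_comp f (xs n)) (cinf_comp f x))) u) = g"
        by (rule ext) (simp add: g_def G_def)
      with \<open>oconv Cinf g cinf_zero\<close> show ?thesis by simp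
    qed
  qed
qed

end
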